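(* For all $A,B\subseteq[n]$ the operators $\Gamma_A$ satisfy $$\{\Gamma_A,\Gamma_B\}=\Gamma_{(A\cup B)\setminus(A\cap B)}+2\,\Gamma_{A\cap B}\Gamma_{A\cup B}+2\,\Gamma_{A\setminus(A\cap B)}\Gamma_{B\setminus(A\cap B)},$$ where $\{X,Y\}=XY+YX$. (Here $\Gamma_\emptyset=-\tfrac12$ and $\Gamma_{\{k\}}=\mu_k$ are scalars.)
   Context: Fix $n\ge1$ and real parameters $\mu_1,\dots,\mu_n>0$; write $[n]=\{1,\dots,n\}$. For $i\in[n]$, $r_i$ is the reflection $(r_if)(x)=f(x_1,\dots,-x_i,\dots,x_n)$ and $T_i=\partial_{x_i}+\frac{\mu_i}{x_i}(1-r_i)$. $\mathcal{C}\ell_n$ is generated by $e_1,\dots,e_n$ with $e_ie_j+e_je_i=-2\delta_{ij}$, $V$ is a fixed left $\mathcal{C}\ell_n$-module, and operators act on $\mathcal{P}(\mathbb{R}^n)\otimes V$ with $x_i,T_i,r_i$ acting on the polynomial factor and $e_i$ on $V$. For $A\subseteq[n]$: $\underline{D}_A=\sum_{i\in A}e_iT_i$, $\underline{x}_A=\sum_{i\in A}e_ix_i$, $\underline{S}_A=\frac12([\underline{x}_A,\underline{D}_A]-1)$, $\Gamma_A=\underline{S}_A\prod_{i\in A}r_i$ (empty sums $0$, empty products $1$). *)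

theory Defs
  imports Main "HOL.Real_Vector_Spaces"
begin

text \<open>
Elements of P(R^n) (x) V are represented by their coefficient functions:
a function F :: (nat => nat) => 'v assigns to each exponent vector alpha
(alpha i = exponent of x_i) the V-coefficient of the monomial x^alpha.
Variables are indexed by [n] = {1..n}.
\<close>

type_synonym 'v pv = "(nat \<Rightarrow> nat) \<Rightarrow> 'v"

definition is_poly :: "nat \<Rightarrow> 'v::zero pv \<Rightarrow> bool" where
  "is_poly n F \<longleftrightarrow> finite {\<alpha>. F \<alpha> \<noteq> 0} \<and>
     (\<forall>\<alpha>. F \<alpha> \<noteq> 0 \<longrightarrow> (\<forall>i. i \<notin> {1..n} \<longrightarrow> \<alpha> i = 0))"

definition mulx :: "nat \<Rightarrow> 'v::real_vector pv \<Rightarrow> 'v pv" where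
  "mulx i F = (\<lambda>\<alpha>. if \<alpha> i = 0 then 0 else F (\<alpha>(i := \<alpha> i - 1)))"

definition pdx :: "nat \<Rightarrow> 'v::real_vector pv \<Rightarrow> 'v pv" where
  "pdx i F = (\<lambda>\<alpha>. real (\<alpha> i + 1) *\<^sub>R F (\<alpha>(i := \<alpha> i + 1)))"

text \<open>division by x_i (exact on polynomials divisible by x_i)\<close>
definition divx :: "nat \<Rightarrow> 'v::real_vector pv \<Rightarrow> 'v pv" where
  "divx i F = (\<lambda>\<alpha>. F (\<alpha>(i := \<alpha> i + 1)))"

definition refl :: "nat \<Rightarrow> 'v::real_vector pv \<Rightarrow> 'v pv" where
  "refl i F = (\<lambda>\<alpha>. ((-1::real) ^ (\<alpha> i)) *\<^sub>R F \<alpha>)"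

definition refl_set :: "nat set \<Rightarrow> 'v::real_vector pv \<Rightarrow> 'v pv" where
  "refl_set A F = (\<lambda>\<alpha>. (\<Prod>i\<in>A. (-1::real) ^ (\<alpha> i)) *\<^sub>R F \<alpha>)"

definition dunkl :: "(nat \<Rightarrow> real) \<Rightarrow> nat \<Rightarrow> 'v::real_vector pv \<Rightarrow> 'v pv" where
  "dunkl \<mu> i F = (\<lambda>\<alpha>. pdx i F \<alpha> + \<mu> i *\<^sub>R divx i (\<lambda>\<beta>. F \<beta> - refl i F \<beta>) \<alpha>)"

definition DA :: "(nat \<Rightarrow> real) \<Rightarrow> (nat \<Rightarrow> 'v \<Rightarrow> 'v) \<Rightarrow> nat set \<Rightarrow> 'v::real_vector pv \<Rightarrow> 'v pv" where
  "DA \<mu> e A F = (\<lambda>\<alpha>. \<Sum>i\<in>A. e i (dunkl \<mu> i F \<alpha>))"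

definition XA :: "(nat \<Rightarrow> 'v \<Rightarrow> 'v) \<Rightarrow> nat set \<Rightarrow> 'v::real_vector pv \<Rightarrow> 'v pv" where
  "XA e A F = (\<lambda>\<alpha>. \<Sum>i\<in>A. e i (mulx i F \<alpha>))"

definition SA :: "(nat \<Rightarrow> real) \<Rightarrow> (nat \<Rightarrow> 'v \<Rightarrow> 'v) \<Rightarrow> nat set \<Rightarrow> 'v::real_vector pv \<Rightarrow> 'v pv" where
  "SA \<mu> e A F = (\<lambda>\<alpha>. (1/2::real) *\<^sub>R
      (XA e A (DA \<mu> e A F) \<alpha> - DA \<mu> e A (XA e A F) \<alpha> - F \<alpha>))"

definition Gamma :: "(nat \<Rightarrow> real) \<Rightarrow> (nat \<Rightarrow> 'v \<Rightarrow> 'v) \<Rightarrow> nat set \<Rightarrow> 'v::real_vector pv \<Rightarrow> 'v pv" where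
  "Gamma \<mu> e A F = SA \<mu> e A (refl_set A F)"

end

theory Submission
  imports Defs
begin


definition lin :: "('v::real_vector pv \<Rightarrow> 'v pv) \<Rightarrow> bool" where
  "lin f \<longleftrightarrow> (\<forall>F G. f (\<lambda>\<alpha>. F \<alpha> + G \<alpha>) = (\<lambda>\<alpha>. f F \<alpha> + f G \<alpha>)) \<and>
              (\<forall>c F. f (\<lambda>\<alpha>. c *\<^sub>R F \<alpha>) = (\<lambda>\<alpha>. c *\<^sub>R f F \<alpha>))"

lemma lin_id: "lin (\<lambda>F. F)" by (simp add: lin_def)

typedef (overloaded) 'v lop = "{f::'v::real_vector pv \<Rightarrow> 'v pv. lin f}" morphisms app Op
  using lin_id by blast

lemma lin_app: "lin (app a)" using app by auto
lemma app_add: "app a (\<lambda>\<alpha>. F \<alpha> + G \<alpha>) = (\<lambda>\<alpha>. app a F \<alpha> + app a G \<alpha>)"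
  using lin_app[of a] by (simp add: lin_def)
lemma app_scale: "app a (\<lambda>\<alpha>. c *\<^sub>R F \<alpha>) = (\<lambda>\<alpha>. c *\<^sub>R app a F \<alpha>)"
  using lin_app[of a] by (simp add: lin_def)
lemma app_zero: "app a (\<lambda>\<alpha>. 0) = (\<lambda>\<alpha>. 0)"
  using app_scale[of a 0 "\<lambda>\<alpha>. 0"] by simp
lemma app_minus: "app a (\<lambda>\<alpha>. - F \<alpha>) = (\<lambda>\<alpha>. - app a F \<alpha>)"
  using app_scale[of a "-1" F] by simp
lemma app_diff: "app a (\<lambda>\<alpha>. F \<alpha> - G \<alpha>) = (\<lambda>\<alpha>. app a F \<alpha> - app a G \<alpha>)"
  using app_add[of a F "\<lambda>\<alpha>. - G \<alpha>"] app_minus[of a G] by (simp add: fun_eq_iff)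

lemma app_inject': "(\<And>F. app a F = app b F) \<Longrightarrow> a = b"
  by (metis app_inject ext)

lemma lin_comp: "lin f \<Longrightarrow> lin g \<Longrightarrow> lin (\<lambda>F. f (g F))" by (simp add: lin_def)
lemma lin_plus: "lin f \<Longrightarrow> lin g \<Longrightarrow> lin (\<lambda>F \<alpha>. f F \<alpha> + g F \<alpha>)"
  by (simp add: lin_def scaleR_add_right fun_eq_iff)
lemma lin_scale: "lin f \<Longrightarrow> lin (\<lambda>F \<alpha>. c *\<^sub>R f F \<alpha>)"
  by (simp add: lin_def scaleR_add_right fun_eq_iff)
lemma lin_zero: "lin (\<lambda>F \<alpha>. 0)" by (simp add: lin_def)

instantiation lop :: (real_vector) real_algebra
begin
definition "0 = Op (\<lambda>F \<alpha>. 0)"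
definition "a + b = Op (\<lambda>F \<alpha>. app a F \<alpha> + app b F \<alpha>)"
definition "c *\<^sub>R a = Op (\<lambda>F \<alpha>. c *\<^sub>R app a F \<alpha>)"
definition "- a = Op (\<lambda>F \<alpha>. - app a F \<alpha>)"
definition "a - b = Op (\<lambda>F \<alpha>. app a F \<alpha> - app b F \<alpha>)"
definition "a * b = Op (\<lambda>F. app a (app b F))"

lemma app_0: "app 0 F = (\<lambda>\<alpha>. 0)" by (simp add: zero_lop_def Op_inverse lin_zero)
lemma app_plus: "app (a + b) F = (\<lambda>\<alpha>. app a F \<alpha> + app b F \<alpha>)"
  by (simp add: plus_lop_def Op_inverse lin_plus lin_app)
lemma app_sc: "app (c *\<^sub>R a) F = (\<lambda>\<alpha>. c *\<^sub>R app a F \<alpha>)"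
  by (simp add: scaleR_lop_def Op_inverse lin_scale lin_app)
lemma lin_neg: "lin f \<Longrightarrow> lin (\<lambda>F \<alpha>. - f F \<alpha>)"
  by (simp add: lin_def fun_eq_iff algebra_simps)
lemma lin_diff: "lin f \<Longrightarrow> lin g \<Longrightarrow> lin (\<lambda>F \<alpha>. f F \<alpha> - g F \<alpha>)"
  by (simp add: lin_def fun_eq_iff algebra_simps)
lemma app_uminus: "app (- a) F = (\<lambda>\<alpha>. - app a F \<alpha>)"
  by (simp add: uminus_lop_def Op_inverse lin_neg lin_app)
lemma app_minus': "app (a - b) F = (\<lambda>\<alpha>. app a F \<alpha> - app b F \<alpha>)"
  by (simp add: minus_lop_def Op_inverse lin_diff lin_app)
lemma app_times: "app (a * b) F = app a (app b F)"
  by (simp add: times_lop_def Op_inverse lin_comp lin_app)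

instance
  apply standard
  apply (rule app_inject'; simp add: app_plus app_times app_sc app_uminus app_minus' app_0 app_add app_scale
     algebra_simps scaleR_add_right scaleR_add_left)+
  done
end

instantiation lop :: (real_vector) monoid_mult
begin
definition "1 = Op (\<lambda>F. F)"
lemma app_1: "app 1 F = F" by (simp add: one_lop_def Op_inverse lin_id)
instance by standard (rule app_inject'; simp add: app_1 app_times)+
end




lemma app_sum: "finite U \<Longrightarrow> app (sum f U) F = (\<lambda>\<alpha>. \<Sum>i\<in>U. app (f i) F \<alpha>)"
  by (induction U rule: finite_induct) (simp_all add: app_0 app_plus)

lemma m1pow_pred: "k > 0 \<Longrightarrow> (-1::real) ^ (k - Suc 0) = - ((-1) ^ k)"
  by (cases k) auto

lemma dunkl_alt: "dunkl \<mu> i F = (\<lambda>\<alpha>. (real (\<alpha> i + 1) + \<mu> i * (1 + (-1) ^ (\<alpha> i))) *\<^sub>R F (\<alpha>(i := \<alpha> i + 1)))"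
  by (simp add: dunkl_def pdx_def divx_def refl_def fun_eq_iff algebra_simps)

lemma lin_mulx: "lin (mulx i)" by (simp add: lin_def mulx_def fun_eq_iff)
lemma lin_refl: "lin (refl i)" by (simp add: lin_def refl_def fun_eq_iff algebra_simps)
lemma lin_refl_set: "lin (refl_set U)" by (simp add: lin_def refl_set_def fun_eq_iff algebra_simps)
lemma lin_dunkl: "lin (dunkl \<mu> i)" by (simp add: lin_def dunkl_alt fun_eq_iff algebra_simps)
lemma lin_E: "linear h \<Longrightarrow> lin (\<lambda>F \<alpha>. h (F \<alpha>))"
  by (simp add: lin_def fun_eq_iff linear_add linear_scale)

definition "Xm i = Op (mulx i)"
definition "Rm i = Op (refl i)"
definition "Tm \<mu> i = Op (dunkl \<mu> i)"
definition "Pm U = Op (refl_set U)"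
definition "Em h = Op (\<lambda>F \<alpha>. h (F \<alpha>))"

lemma app_Xm: "app (Xm i) = mulx i" by (simp add: Xm_def Op_inverse lin_mulx)
lemma app_Rm: "app (Rm i) = refl i" by (simp add: Rm_def Op_inverse lin_refl)
lemma app_Tm: "app (Tm \<mu> i) = dunkl \<mu> i" by (simp add: Tm_def Op_inverse lin_dunkl)
lemma app_Pm: "app (Pm U) = refl_set U" by (simp add: Pm_def Op_inverse lin_refl_set)
lemma app_Em: "linear h \<Longrightarrow> app (Em h) F = (\<lambda>\<alpha>. h (F \<alpha>))" by (simp add: Em_def Op_inverse lin_E)

lemmas appS = app_Xm app_Rm app_Tm app_Pm app_times app_plus app_sc app_uminus app_minus' app_1 app_0

lemma XX: "Xm i * Xm j = Xm j * Xm i"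
  by (rule app_inject') (auto simp: appS mulx_def fun_eq_iff fun_upd_twist)

lemma RR: "Rm i * Rm j = Rm j * Rm i"
  by (rule app_inject') (auto simp: appS refl_def fun_eq_iff)
lemma RR1: "Rm i * Rm i = 1"
  by (rule app_inject') (auto simp: appS refl_def fun_eq_iff power_mult_distrib[symmetric])

lemma RX: "Rm i * Xm j = (if i = j then - (Xm j * Rm i) else Xm j * Rm i)"
  by (rule app_inject') (auto simp: appS refl_def mulx_def fun_eq_iff m1pow_pred)

lemma TX: "i \<noteq> j \<Longrightarrow> Tm \<mu> i * Xm j = Xm j * Tm \<mu> i"
  by (rule app_inject') (auto simp: appS dunkl_alt mulx_def fun_eq_iff fun_upd_twist)

lemma TXi: "Tm \<mu> i * Xm i = Xm i * Tm \<mu> i + 1 + (2 * \<mu> i) *\<^sub>R Rm i"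
proof (rule app_inject', rule ext)
  fix F and \<alpha> :: "nat \<Rightarrow> nat"
  have L: "app (Tm \<mu> i * Xm i) F \<alpha> = (real (\<alpha> i + 1) + \<mu> i * (1 + (-1) ^ (\<alpha> i))) *\<^sub>R F \<alpha>"
    by (simp add: appS dunkl_alt mulx_def)
  show "app (Tm \<mu> i * Xm i) F \<alpha> = app (Xm i * Tm \<mu> i + 1 + (2 * \<mu> i) *\<^sub>R Rm i) F \<alpha>"
  proof (cases "\<alpha> i")
    case 0
    have "app (Xm i * Tm \<mu> i + 1 + (2 * \<mu> i) *\<^sub>R Rm i) F \<alpha> = (1 + 2 * \<mu> i) *\<^sub>R F \<alpha>"
      using 0 by (simp add: appS mulx_def refl_def scaleR_add_left)
    then show ?thesis using 0 L by simp
  next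
    case (Suc k)
    have a: "(\<alpha>(i := k))(i := Suc k) = \<alpha>" using Suc by auto
    have "app (Xm i * Tm \<mu> i + 1 + (2 * \<mu> i) *\<^sub>R Rm i) F \<alpha>
       = (real (k + 1) + \<mu> i * (1 + (-1) ^ k)) *\<^sub>R F \<alpha> + F \<alpha> + (2 * \<mu> i * (-1)^(Suc k)) *\<^sub>R F \<alpha>"
      using Suc a by (simp add: appS mulx_def refl_def dunkl_alt)
    also have "\<dots> = ((real (k + 1) + \<mu> i * (1 + (-1) ^ k)) + 1 + 2 * \<mu> i * (-1)^(Suc k)) *\<^sub>R F \<alpha>"
      by (simp only: scaleR_add_left scaleR_one)
    finally have "app (Xm i * Tm \<mu> i + 1 + (2 * \<mu> i) *\<^sub>R Rm i) F \<alpha>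
       = ((real (k + 1) + \<mu> i * (1 + (-1) ^ k)) + 1 + 2 * \<mu> i * (-1)^(Suc k)) *\<^sub>R F \<alpha>" .
    moreover have "(real (k + 1) + \<mu> i * (1 + (-1) ^ k)) + 1 + 2 * \<mu> i * (-1)^(Suc k)
       = real (\<alpha> i + 1) + \<mu> i * (1 + (-1) ^ (\<alpha> i))"
      using Suc by (simp add: algebra_simps)
    ultimately show ?thesis using L by simp
  qed
qed

lemma RT: "Rm i * Tm \<mu> j = (if i = j then - (Tm \<mu> j * Rm i) else Tm \<mu> j * Rm i)"
  by (rule app_inject') (auto simp: appS refl_def dunkl_alt fun_eq_iff)

lemma TT: "Tm \<mu> i * Tm \<mu> j = Tm \<mu> j * Tm \<mu> i"
proof (cases "i = j")
  case False
  show ?thesis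
    by (rule app_inject') (use False in \<open>simp add: appS dunkl_alt fun_eq_iff fun_upd_twist mult.commute\<close>)
qed simp

lemma EX: "linear h \<Longrightarrow> Em h * Xm i = Xm i * Em h"
  by (rule app_inject') (simp add: appS app_Em mulx_def fun_eq_iff linear_0)
lemma ER: "linear h \<Longrightarrow> Em h * Rm i = Rm i * Em h"
  by (rule app_inject') (simp add: appS app_Em refl_def fun_eq_iff linear_scale)
lemma ET: "linear h \<Longrightarrow> Em h * Tm \<mu> i = Tm \<mu> i * Em h"
  by (rule app_inject') (simp add: appS app_Em dunkl_alt fun_eq_iff linear_scale)
lemma EP: "linear h \<Longrightarrow> Em h * Pm U = Pm U * Em h"
  by (rule app_inject') (simp add: appS app_Em refl_set_def fun_eq_iff linear_scale)
lemma EE: "linear h \<Longrightarrow> linear g \<Longrightarrow> (\<forall>v. h (g v) + g (h v) = c *\<^sub>R v) \<Longrightarrow>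
   Em h * Em g + Em g * Em h = c *\<^sub>R 1"
  by (rule app_inject') (simp add: appS app_Em fun_eq_iff)
lemma Pm_empty: "Pm {} = 1"
  by (rule app_inject') (simp add: appS refl_set_def)
lemma Pm_insert: "finite U \<Longrightarrow> i \<notin> U \<Longrightarrow> Pm (insert i U) = Rm i * Pm U"
  by (rule app_inject') (simp add: appS refl_set_def refl_def fun_eq_iff)




definition comm :: "'a::ring \<Rightarrow> 'a \<Rightarrow> bool" where "comm a b \<longleftrightarrow> a * b = b * a"
definition anti :: "'a::ring \<Rightarrow> 'a \<Rightarrow> bool" where "anti a b \<longleftrightarrow> a * b = - (b * a)"

lemma comm_mult: "comm a b \<Longrightarrow> comm a c \<Longrightarrow> comm a (b * c)"
  by (simp add: comm_def) (metis mult.assoc)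
lemma anti_anti_mult: "anti a b \<Longrightarrow> anti a c \<Longrightarrow> comm a (b * c)"
  by (simp add: comm_def anti_def) (metis mult.assoc mult_minus_left mult_minus_right minus_minus)
lemma anti_comm_mult: "anti a b \<Longrightarrow> comm a c \<Longrightarrow> anti a (b * c)"
  by (simp add: comm_def anti_def) (metis mult.assoc mult_minus_left mult_minus_right)
lemma comm_anti_mult: "comm a b \<Longrightarrow> anti a c \<Longrightarrow> anti a (b * c)"
  by (simp add: comm_def anti_def) (metis mult.assoc mult_minus_left mult_minus_right)
lemma comm_add: "comm a b \<Longrightarrow> comm a c \<Longrightarrow> comm a (b + c)"
  by (simp add: comm_def algebra_simps)
lemma anti_add: "anti a b \<Longrightarrow> anti a c \<Longrightarrow> anti a (b + c)"
  by (simp add: anti_def algebra_simps)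
lemma comm_diff: "comm a b \<Longrightarrow> comm a c \<Longrightarrow> comm a (b - c)"
  by (simp add: comm_def algebra_simps)
lemma anti_diff: "anti a b \<Longrightarrow> anti a c \<Longrightarrow> anti a (b - c)"
  by (simp add: anti_def algebra_simps)
lemma comm_scale: "comm a b \<Longrightarrow> comm (a::'a::real_algebra) (r *\<^sub>R b)"
  by (simp add: comm_def)
lemma anti_scale: "anti a b \<Longrightarrow> anti (a::'a::real_algebra) (r *\<^sub>R b)"
  by (simp add: anti_def)
lemma comm_one: "comm (a::'a::{ring,monoid_mult}) 1" by (simp add: comm_def)
lemma comm_sum: "(\<And>i. i \<in> U \<Longrightarrow> comm a (f i)) \<Longrightarrow> comm a (sum f U)"
  by (induction U rule: infinite_finite_induct) (auto simp: comm_def algebra_simps sum_distrib_left sum_distrib_right)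
lemma anti_sum: "(\<And>i. i \<in> U \<Longrightarrow> anti a (f i)) \<Longrightarrow> anti a (sum f U)"
  by (induction U rule: infinite_finite_induct) (auto simp: anti_def algebra_simps)
lemma comm_sym: "comm a b \<Longrightarrow> comm b a" by (simp add: comm_def)
lemma anti_sym: "anti a b \<Longrightarrow> anti b a" by (simp add: anti_def)
lemma comm_refl: "comm a a" by (simp add: comm_def)

lemma sum_anti: assumes "\<And>i j. i \<in> U \<Longrightarrow> j \<in> V \<Longrightarrow> anti (f i) (g j)"
  shows "anti (sum f U) (sum g V)"
proof (rule anti_sum)
  fix j assume j: "j \<in> V"
  have "anti (g j) (sum f U)" by (rule anti_sum, rule anti_sym, rule assms) (use j in auto)
  then show "anti (sum f U) (g j)" by (rule anti_sym)
qed

lemma sum_comm: assumes "\<And>i j. i \<in> U \<Longrightarrow> j \<in> V \<Longrightarrow> comm (f i) (g j)"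
  shows "comm (sum f U) (sum g V)"
proof (rule comm_sum)
  fix j assume j: "j \<in> V"
  have "comm (g j) (sum f U)" by (rule comm_sum, rule comm_sym, rule assms) (use j in auto)
  then show "comm (sum f U) (g j)" by (rule comm_sym)
qed




lemma comm_nest: "a * b = b * a \<Longrightarrow> a * (b * z) = b * (a * (z::'a::ring))"
  by (metis mult.assoc)

locale dd =
  fixes n :: nat and \<mu> :: "nat \<Rightarrow> real" and e :: "nat \<Rightarrow> 'v::real_vector \<Rightarrow> 'v"
  assumes lin_e: "\<forall>i\<in>{1..n}. linear (e i)"
    and cl: "\<forall>i\<in>{1..n}. \<forall>j\<in>{1..n}. \<forall>v. e i (e j v) + e j (e i v) = (if i = j then -2 else 0) *\<^sub>R v"
begin

abbreviation E :: "nat \<Rightarrow> 'v lop" where "E i \<equiv> Em (e i)"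

definition X :: "nat set \<Rightarrow> 'v lop" where "X U = (\<Sum>i\<in>U. E i * Xm i)"
definition D :: "nat set \<Rightarrow> 'v lop" where "D U = (\<Sum>i\<in>U. E i * Tm \<mu> i)"
definition S :: "nat set \<Rightarrow> 'v lop" where "S U = (1/2) *\<^sub>R (X U * D U - D U * X U - 1)"
definition G :: "nat set \<Rightarrow> 'v lop" where "G U = S U * Pm U"

lemma app_X: "U \<subseteq> {1..n} \<Longrightarrow> app (X U) H = XA e U H"
proof -
  assume U: "U \<subseteq> {1..n}"
  then have "finite U" using finite_subset by blast
  then show ?thesis unfolding X_def XA_def
    using U lin_e by (auto simp: app_sum appS app_Em intro!: sum.cong ext)
qed

lemma app_D: "U \<subseteq> {1..n} \<Longrightarrow> app (D U) H = DA \<mu> e U H"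
proof -
  assume U: "U \<subseteq> {1..n}"
  then have "finite U" using finite_subset by blast
  then show ?thesis unfolding D_def DA_def
    using U lin_e by (auto simp: app_sum appS app_Em intro!: sum.cong ext)
qed

lemma app_G: "U \<subseteq> {1..n} \<Longrightarrow> app (G U) H = Gamma \<mu> e U H"
  by (simp add: G_def S_def Gamma_def SA_def appS app_X app_D)

lemma linE: "i \<in> {1..n} \<Longrightarrow> linear (e i)" using lin_e by auto

lemma EXc: "i \<in> {1..n} \<Longrightarrow> comm (E i) (Xm j)" by (simp add: comm_def EX linE)
lemma ETc: "i \<in> {1..n} \<Longrightarrow> comm (E i) (Tm \<mu> j)" by (simp add: comm_def ET linE)
lemma ERc: "i \<in> {1..n} \<Longrightarrow> comm (E i) (Rm j)" by (simp add: comm_def ER linE)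
lemma EPc: "i \<in> {1..n} \<Longrightarrow> comm (E i) (Pm W)" by (simp add: comm_def EP linE)

lemma EEsum: "i \<in> {1..n} \<Longrightarrow> j \<in> {1..n} \<Longrightarrow>
   E i * E j + E j * E i = (if i = j then -2 else 0) *\<^sub>R 1"
  by (rule EE) (use linE cl in auto)

lemma EEa: "i \<in> {1..n} \<Longrightarrow> j \<in> {1..n} \<Longrightarrow> i \<noteq> j \<Longrightarrow> anti (E i) (E j)"
  using EEsum[of i j] by (simp add: anti_def eq_neg_iff_add_eq_0)

lemma odd_pair:
  assumes i: "i \<in> {1..n}" and j: "j \<in> {1..n}" and ij: "i \<noteq> j"
    and "comm a (E j)" and "comm b (E i)" and "comm a b"
  shows "anti (E i * a) (E j * b)"
proof -
  have "E i * a * (E j * b) = (E i * E j) * (a * b)"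
    using assms(4) by (simp add: comm_def mult.assoc comm_nest)
  also have "\<dots> = - ((E j * E i) * (b * a))"
    using EEa[OF i j ij] assms(6) by (simp add: anti_def comm_def)
  also have "\<dots> = - (E j * b * (E i * a))"
    using assms(5) by (simp add: comm_def mult.assoc comm_nest)
  finally show ?thesis by (simp add: anti_def)
qed


lemma move2:
  fixes r p x :: "'a::real_algebra"
  assumes "r * x = s1 *\<^sub>R (x * r)" "p * x = s2 *\<^sub>R (x * p)"
  shows "(r * p) * x = (s1 * s2) *\<^sub>R (x * (r * p))"
proof -
  have "(r * p) * x = r * (p * x)" by (simp add: mult.assoc)
  also have "\<dots> = s2 *\<^sub>R ((r * x) * p)" using assms(2) by (simp add: mult.assoc)
  also have "\<dots> = (s1 * s2) *\<^sub>R (x * (r * p))" using assms(1) by (simp add: mult.assoc)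
  finally show ?thesis .
qed

lemma RX': "Rm i * Xm j = (if i = j then -1 else 1) *\<^sub>R (Xm j * Rm i)"
  using RX[of i j] by (cases "i = j") simp_all
lemma RT': "Rm i * Tm \<mu> j = (if i = j then -1 else 1) *\<^sub>R (Tm \<mu> j * Rm i)"
  using RT[of i \<mu> j] by (cases "i = j") simp_all

lemma PX': "finite W \<Longrightarrow> Pm W * Xm j = (if j \<in> W then -1 else 1) *\<^sub>R (Xm j * Pm W)"
proof (induction W rule: finite_induct)
  case empty then show ?case by (simp add: Pm_empty)
next
  case (insert i W)
  show ?case using move2[OF RX'[of i j] insert.IH] insert.hyps by (auto simp: Pm_insert)
qed

lemma PT': "finite W \<Longrightarrow> Pm W * Tm \<mu> j = (if j \<in> W then -1 else 1) *\<^sub>R (Tm \<mu> j * Pm W)"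
proof (induction W rule: finite_induct)
  case empty then show ?case by (simp add: Pm_empty)
next
  case (insert i W)
  show ?case using move2[OF RT'[of i j] insert.IH] insert.hyps by (auto simp: Pm_insert)
qed

lemma PXa: "finite W \<Longrightarrow> j \<in> W \<Longrightarrow> anti (Pm W) (Xm j)" using PX'[of W j] by (simp add: anti_def)
lemma PXc: "finite W \<Longrightarrow> j \<notin> W \<Longrightarrow> comm (Pm W) (Xm j)" using PX'[of W j] by (simp add: comm_def)
lemma PTa: "finite W \<Longrightarrow> j \<in> W \<Longrightarrow> anti (Pm W) (Tm \<mu> j)" using PT'[of W j] by (simp add: anti_def)
lemma PTc: "finite W \<Longrightarrow> j \<notin> W \<Longrightarrow> comm (Pm W) (Tm \<mu> j)" using PT'[of W j] by (simp add: comm_def)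


lemma PPc: "comm (Pm U) (Pm W)"
  by (simp add: comm_def) (rule app_inject', simp add: appS refl_set_def fun_eq_iff)
lemma PP1: "Pm U * Pm U = 1"
  by (rule app_inject') (simp add: appS refl_set_def fun_eq_iff power_mult_distrib[symmetric] prod.distrib[symmetric])
lemma P_union: "finite U \<Longrightarrow> finite V \<Longrightarrow> U \<inter> V = {} \<Longrightarrow> Pm (U \<union> V) = Pm U * Pm V"
  by (rule app_inject') (simp add: appS refl_set_def fun_eq_iff prod.union_disjoint)

lemma fin: "U \<subseteq> {1..n} \<Longrightarrow> finite U" using finite_subset by blast

lemma cXE: "j \<in> {1..n} \<Longrightarrow> comm (Xm i) (E j)" by (rule comm_sym, rule EXc)
lemma cTE: "j \<in> {1..n} \<Longrightarrow> comm (Tm \<mu> i) (E j)" by (rule comm_sym, rule ETc)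

lemma XXa: assumes "U \<subseteq> {1..n}" "V \<subseteq> {1..n}" "U \<inter> V = {}" shows "anti (X U) (X V)"
  unfolding X_def
proof (rule sum_anti)
  fix i j assume ij: "i \<in> U" "j \<in> V"
  then have "i \<in> {1..n}" "j \<in> {1..n}" "i \<noteq> j" using assms by auto
  then show "anti (E i * Xm i) (E j * Xm j)"
    by (intro odd_pair cXE) (simp_all add: comm_def XX)
qed
lemma XDa: assumes "U \<subseteq> {1..n}" "V \<subseteq> {1..n}" "U \<inter> V = {}" shows "anti (X U) (D V)"
  unfolding X_def D_def
proof (rule sum_anti)
  fix i j assume ij: "i \<in> U" "j \<in> V"
  then have "i \<in> {1..n}" "j \<in> {1..n}" "i \<noteq> j" using assms by auto
  then show "anti (E i * Xm i) (E j * Tm \<mu> j)"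
    by (intro odd_pair cXE cTE) (simp_all add: comm_def TX)
qed
lemma DDa: assumes "U \<subseteq> {1..n}" "V \<subseteq> {1..n}" "U \<inter> V = {}" shows "anti (D U) (D V)"
  unfolding D_def
proof (rule sum_anti)
  fix i j assume ij: "i \<in> U" "j \<in> V"
  then have "i \<in> {1..n}" "j \<in> {1..n}" "i \<noteq> j" using assms by auto
  then show "anti (E i * Tm \<mu> i) (E j * Tm \<mu> j)"
    by (intro odd_pair cTE) (simp_all add: comm_def TT)
qed

lemma PEc: "i \<in> U \<Longrightarrow> U \<subseteq> {1..n} \<Longrightarrow> comm (Pm W) (E i)"
  by (rule comm_sym, rule EPc) auto

lemma PXin: assumes "finite W" "U \<subseteq> {1..n}" "U \<subseteq> W" shows "anti (Pm W) (X U)"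
  unfolding X_def
proof (rule anti_sum, rule comm_anti_mult)
  fix i assume "i \<in> U"
  then show "comm (Pm W) (E i)" "anti (Pm W) (Xm i)" using assms PEc[of i U W] PXa[of W i] by auto
qed
lemma PXout: assumes "finite W" "U \<subseteq> {1..n}" "U \<inter> W = {}" shows "comm (Pm W) (X U)"
  unfolding X_def
proof (rule comm_sum, rule comm_mult)
  fix i assume "i \<in> U"
  then show "comm (Pm W) (E i)" "comm (Pm W) (Xm i)" using assms PEc[of i U W] PXc[of W i] by auto
qed
lemma PDin: assumes "finite W" "U \<subseteq> {1..n}" "U \<subseteq> W" shows "anti (Pm W) (D U)"
  unfolding D_def
proof (rule anti_sum, rule comm_anti_mult)
  fix i assume "i \<in> U"
  then show "comm (Pm W) (E i)" "anti (Pm W) (Tm \<mu> i)" using assms PEc[of i U W] PTa[of W i] by auto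
qed
lemma PDout: assumes "finite W" "U \<subseteq> {1..n}" "U \<inter> W = {}" shows "comm (Pm W) (D U)"
  unfolding D_def
proof (rule comm_sum, rule comm_mult)
  fix i assume "i \<in> U"
  then show "comm (Pm W) (E i)" "comm (Pm W) (Tm \<mu> i)" using assms PEc[of i U W] PTc[of W i] by auto
qed

lemma comm_S1: "anti a (X U) \<Longrightarrow> anti a (D U) \<Longrightarrow> comm a (S U)"
  unfolding S_def
  by (intro comm_scale comm_diff comm_one anti_anti_mult)
lemma comm_S2: "comm a (X U) \<Longrightarrow> comm a (D U) \<Longrightarrow> comm a (S U)"
  unfolding S_def
  by (intro comm_scale comm_diff comm_one comm_mult)

lemma PSc: assumes "finite W" "U \<subseteq> {1..n}" "U \<subseteq> W \<or> U \<inter> W = {}" shows "comm (Pm W) (S U)"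
  using assms(3)
proof
  assume "U \<subseteq> W" then show ?thesis using assms(1,2) by (intro comm_S1 PXin PDin)
next
  assume "U \<inter> W = {}" then show ?thesis using assms(1,2) by (intro comm_S2 PXout PDout)
qed

lemma XSc: "U \<subseteq> {1..n} \<Longrightarrow> V \<subseteq> {1..n} \<Longrightarrow> U \<inter> V = {} \<Longrightarrow> comm (X V) (S U)"
  by (intro comm_S1 XXa XDa) (auto simp: Int_commute)
lemma DSc: "U \<subseteq> {1..n} \<Longrightarrow> V \<subseteq> {1..n} \<Longrightarrow> U \<inter> V = {} \<Longrightarrow> comm (D V) (S U)"
  by (intro comm_S1 anti_sym[OF XDa] DDa) (auto simp: Int_commute)
lemma SSc: "U \<subseteq> {1..n} \<Longrightarrow> V \<subseteq> {1..n} \<Longrightarrow> U \<inter> V = {} \<Longrightarrow> comm (S V) (S U)"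
  by (intro comm_sym[of "S U"] comm_S2 comm_sym[OF XSc] comm_sym[OF DSc])

lemma X_union: "U \<subseteq> {1..n} \<Longrightarrow> V \<subseteq> {1..n} \<Longrightarrow> U \<inter> V = {} \<Longrightarrow> X (U \<union> V) = X U + X V"
  unfolding X_def by (rule sum.union_disjoint) (auto simp: fin)
lemma D_union: "U \<subseteq> {1..n} \<Longrightarrow> V \<subseteq> {1..n} \<Longrightarrow> U \<inter> V = {} \<Longrightarrow> D (U \<union> V) = D U + D V"
  unfolding D_def by (rule sum.union_disjoint) (auto simp: fin)


lemma sq:
  assumes U: "U \<subseteq> {1..n}" and c1: "\<And>i j. i \<in> U \<Longrightarrow> j \<in> U \<Longrightarrow> comm (a i) (E j)"
    and c2: "\<And>i j. i \<in> U \<Longrightarrow> j \<in> U \<Longrightarrow> comm (a i) (a j)"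
  shows "(\<Sum>i\<in>U. E i * a i) * (\<Sum>i\<in>U. E i * a i) = - (\<Sum>i\<in>U. a i * a i)"
proof -
  define f where "f i j = (E i * E j) * (a i * a j)" for i j
  have fU: "finite U" using U by (rule fin)
  have L: "(\<Sum>i\<in>U. E i * a i) * (\<Sum>i\<in>U. E i * a i) = (\<Sum>i\<in>U. \<Sum>j\<in>U. f i j)"
    unfolding sum_product f_def
    by (intro sum.cong refl) (use c1 in \<open>simp add: comm_def mult.assoc comm_nest\<close>)
  have sw: "(\<Sum>i\<in>U. \<Sum>j\<in>U. f i j) = (\<Sum>i\<in>U. \<Sum>j\<in>U. f j i)" by (rule sum.swap)
  have "(\<Sum>i\<in>U. \<Sum>j\<in>U. f i j) + (\<Sum>i\<in>U. \<Sum>j\<in>U. f j i) = (\<Sum>i\<in>U. \<Sum>j\<in>U. f i j + f j i)"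
    by (simp add: sum.distrib)
  also have "\<dots> = (\<Sum>i\<in>U. \<Sum>j\<in>U. (if i = j then -2 else 0) *\<^sub>R (a i * a j))"
  proof (intro sum.cong refl)
    fix i j assume ij: "i \<in> U" "j \<in> U"
    have "f i j + f j i = (E i * E j + E j * E i) * (a i * a j)"
      unfolding f_def using c2[OF ij] by (simp add: comm_def distrib_right)
    also have "\<dots> = (if i = j then -2 else 0) *\<^sub>R (a i * a j)" (is "?l = ?r")
    proof -
      have "i \<in> {1..n}" "j \<in> {1..n}" using ij U by auto
      then show "?l = ?r" using EEsum[of i j] by simp
    qed
    finally show "f i j + f j i = (if i = j then -2 else 0) *\<^sub>R (a i * a j)" .
  qed
  also have "\<dots> = (\<Sum>i\<in>U. (-2::real) *\<^sub>R (a i * a i))"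
  proof (intro sum.cong refl)
    fix i assume i: "i \<in> U"
    have "(\<Sum>j\<in>U. (if i = j then -2 else 0) *\<^sub>R (a i * a j)) = (\<Sum>j\<in>U. if i = j then (-2::real) *\<^sub>R (a i * a j) else 0)"
      by (intro sum.cong refl) auto
    also have "\<dots> = (-2::real) *\<^sub>R (a i * a i)" using fU i by (simp add: sum.delta)
    finally show "(\<Sum>j\<in>U. (if i = j then -2 else 0) *\<^sub>R (a i * a j)) = (-2::real) *\<^sub>R (a i * a i)" .
  qed
  finally have eq: "(\<Sum>i\<in>U. \<Sum>j\<in>U. f i j) + (\<Sum>i\<in>U. \<Sum>j\<in>U. f j i) = (\<Sum>i\<in>U. (-2::real) *\<^sub>R (a i * a i))" .
  define T where "T = (\<Sum>i\<in>U. \<Sum>j\<in>U. f i j)"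
  define M where "M = (\<Sum>i\<in>U. a i * a i)"
  have "T + T = (-2::real) *\<^sub>R M" using eq sw unfolding T_def M_def by (simp add: scaleR_sum_right)
  then have "(2::real) *\<^sub>R T = (2::real) *\<^sub>R (- M)" by (simp add: scaleR_2)
  then have "(1/2::real) *\<^sub>R ((2::real) *\<^sub>R T) = (1/2::real) *\<^sub>R ((2::real) *\<^sub>R (- M))" by simp
  then have "T = - M" by (simp only: scaleR_scaleR) simp
  then show ?thesis using L unfolding T_def M_def by simp
qed

lemma commutator_sum:
  assumes "\<And>j. j \<in> U \<Longrightarrow> comm Q (E j)"
  shows "Q * (\<Sum>j\<in>U. E j * b j) - (\<Sum>j\<in>U. E j * b j) * Q = (\<Sum>j\<in>U. E j * (Q * b j - b j * Q))"
  unfolding sum_distrib_left sum_distrib_right sum_subtractf[symmetric]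
  by (intro sum.cong refl) (use assms in \<open>simp add: comm_def algebra_simps comm_nest mult.assoc\<close>)

lemma TXi_n: "Tm \<mu> i * (Xm i * z) = Xm i * (Tm \<mu> i * z) + z + (2 * \<mu> i) *\<^sub>R (Rm i * z)"
proof -
  have "Tm \<mu> i * (Xm i * z) = (Tm \<mu> i * Xm i) * z" by (simp add: mult.assoc)
  also have "\<dots> = Xm i * (Tm \<mu> i * z) + z + (2 * \<mu> i) *\<^sub>R (Rm i * z)"
    by (simp add: TXi distrib_right mult.assoc)
  finally show ?thesis .
qed
lemma RXi: "Rm i * Xm i = - (Xm i * Rm i)" using RX[of i i] by simp
lemma RXi_n: "Rm i * (Xm i * z) = - (Xm i * (Rm i * z))" proof -
  have "Rm i * (Xm i * z) = (Rm i * Xm i) * z" by (simp add: mult.assoc)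
  then show ?thesis by (simp add: RXi mult.assoc)
qed
lemma RTi: "Rm i * Tm \<mu> i = - (Tm \<mu> i * Rm i)" using RT[of i \<mu> i] by simp
lemma RTi_n: "Rm i * (Tm \<mu> i * z) = - (Tm \<mu> i * (Rm i * z))" proof -
  have "Rm i * (Tm \<mu> i * z) = (Rm i * Tm \<mu> i) * z" by (simp add: mult.assoc)
  then show ?thesis by (simp add: RTi mult.assoc)
qed

lemma xxT: "Xm i * Xm i * Tm \<mu> i - Tm \<mu> i * (Xm i * Xm i) = (-2) *\<^sub>R Xm i"
proof -
  have "Tm \<mu> i * (Xm i * Xm i) = Xm i * (Tm \<mu> i * Xm i) + Xm i + (2 * \<mu> i) *\<^sub>R (Rm i * Xm i)"
    (is "?L = _") by (rule TXi_n)
  also have "\<dots> = Xm i * (Xm i * Tm \<mu> i + 1 + (2 * \<mu> i) *\<^sub>R Rm i) + Xm i - (2 * \<mu> i) *\<^sub>R (Xm i * Rm i)"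
    by (simp add: TXi RXi)
  also have "\<dots> = Xm i * Xm i * Tm \<mu> i + 2 *\<^sub>R Xm i"
    (is "_ = ?R") by (simp add: distrib_left mult.assoc scaleR_2)
  finally have h: "?L = ?R" .
  show ?thesis unfolding h by simp
qed

lemma xTT: "Xm i * (Tm \<mu> i * Tm \<mu> i) - Tm \<mu> i * Tm \<mu> i * Xm i = (-2) *\<^sub>R Tm \<mu> i"
proof -
  have "Tm \<mu> i * Tm \<mu> i * Xm i = Tm \<mu> i * (Tm \<mu> i * Xm i)" (is "?L = _") by (simp add: mult.assoc)
  also have "\<dots> = Tm \<mu> i * (Xm i * Tm \<mu> i + 1 + (2 * \<mu> i) *\<^sub>R Rm i)" by (simp add: TXi)
  also have "\<dots> = Tm \<mu> i * (Xm i * Tm \<mu> i) + Tm \<mu> i + (2 * \<mu> i) *\<^sub>R (Tm \<mu> i * Rm i)"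
    by (simp add: distrib_left)
  also have "\<dots> = Xm i * (Tm \<mu> i * Tm \<mu> i) + Tm \<mu> i + (2 * \<mu> i) *\<^sub>R (Rm i * Tm \<mu> i) + Tm \<mu> i + (2 * \<mu> i) *\<^sub>R (Tm \<mu> i * Rm i)"
    by (simp add: TXi_n)
  also have "\<dots> = Xm i * (Tm \<mu> i * Tm \<mu> i) + 2 *\<^sub>R Tm \<mu> i"
    (is "_ = ?R") by (simp add: RTi scaleR_2)
  finally have h: "?L = ?R" .
  show ?thesis unfolding h by simp
qed


lemma XXD: assumes U: "U \<subseteq> {1..n}" shows "X U * (X U * D U) = D U * (X U * X U) + 2 *\<^sub>R X U"
proof -
  define Q :: "'v lop" where "Q = (\<Sum>i\<in>U. Xm i * Xm i)"
  have fU: "finite U" using U by (rule fin)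
  have XX2: "X U * X U = - Q" unfolding X_def Q_def
  proof (rule sq[OF U])
    fix i j assume "i \<in> U" "j \<in> U"
    then show "comm (Xm i) (E j)" using U by (intro cXE) auto
    show "comm (Xm i) (Xm j)" by (simp add: comm_def XX)
  qed
  have cQ: "comm Q (E j)" if "j \<in> U" for j
    unfolding Q_def using that U by (intro comm_sym[OF comm_sum] comm_mult EXc) auto
  have QT: "Q * Tm \<mu> j - Tm \<mu> j * Q = (-2) *\<^sub>R Xm j" if j: "j \<in> U" for j
  proof -
    have "Q * Tm \<mu> j - Tm \<mu> j * Q = (\<Sum>i\<in>U. Xm i * Xm i * Tm \<mu> j - Tm \<mu> j * (Xm i * Xm i))"
      unfolding Q_def sum_distrib_left sum_distrib_right sum_subtractf by simp
    also have "\<dots> = (\<Sum>i\<in>U. if i = j then (-2) *\<^sub>R Xm j else 0)"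
    proof (intro sum.cong refl)
      fix i assume "i \<in> U"
      show "Xm i * Xm i * Tm \<mu> j - Tm \<mu> j * (Xm i * Xm i) = (if i = j then (-2) *\<^sub>R Xm j else 0)"
      proof (cases "i = j")
        case True then show ?thesis using xxT[of i] by simp
      next
        case False
        have a: "Tm \<mu> j * Xm i = Xm i * Tm \<mu> j" using TX[of j i \<mu>] False by simp
        have "Tm \<mu> j * (Xm i * Xm i) = (Tm \<mu> j * Xm i) * Xm i" by (simp only: mult.assoc)
        also have "\<dots> = Xm i * (Tm \<mu> j * Xm i)" by (simp only: a mult.assoc)
        also have "\<dots> = Xm i * Xm i * Tm \<mu> j" by (simp only: a mult.assoc)
        finally have h: "Tm \<mu> j * (Xm i * Xm i) = Xm i * Xm i * Tm \<mu> j" .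
        show ?thesis using False unfolding h by simp
      qed
    qed
    also have "\<dots> = (-2) *\<^sub>R Xm j" using fU j by (simp add: sum.delta')
    finally show ?thesis .
  qed
  have "Q * D U - D U * Q = (\<Sum>j\<in>U. E j * (Q * Tm \<mu> j - Tm \<mu> j * Q))"
    unfolding D_def by (rule commutator_sum) (rule cQ)
  also have "\<dots> = (-2) *\<^sub>R X U" unfolding X_def scaleR_sum_right
    by (intro sum.cong refl) (simp add: QT)
  finally have C: "Q * D U - D U * Q = (-2) *\<^sub>R X U" .
  have "X U * (X U * D U) = - (Q * D U)" by (simp add: mult.assoc[symmetric] XX2)
  also have "\<dots> = - (D U * Q + (-2) *\<^sub>R X U)" using C by (simp add: algebra_simps)
  also have "\<dots> = D U * (X U * X U) + 2 *\<^sub>R X U" by (simp add: XX2)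
  finally show ?thesis .
qed


lemma XDD: assumes U: "U \<subseteq> {1..n}" shows "X U * (D U * D U) = D U * (D U * X U) + 2 *\<^sub>R D U"
proof -
  define Q :: "'v lop" where "Q = (\<Sum>i\<in>U. Tm \<mu> i * Tm \<mu> i)"
  have fU: "finite U" using U by (rule fin)
  have DD2: "D U * D U = - Q" unfolding D_def Q_def
  proof (rule sq[OF U])
    fix i j assume "i \<in> U" "j \<in> U"
    then show "comm (Tm \<mu> i) (E j)" using U by (intro cTE) auto
    show "comm (Tm \<mu> i) (Tm \<mu> j)" by (simp add: comm_def TT)
  qed
  have cQ: "comm Q (E j)" if "j \<in> U" for j
    unfolding Q_def using that U by (intro comm_sym[OF comm_sum] comm_mult ETc) auto
  have QX: "Q * Xm j - Xm j * Q = 2 *\<^sub>R Tm \<mu> j" if j: "j \<in> U" for j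
  proof -
    have "Q * Xm j - Xm j * Q = (\<Sum>i\<in>U. Tm \<mu> i * Tm \<mu> i * Xm j - Xm j * (Tm \<mu> i * Tm \<mu> i))"
      unfolding Q_def sum_distrib_left sum_distrib_right sum_subtractf by simp
    also have "\<dots> = (\<Sum>i\<in>U. if i = j then 2 *\<^sub>R Tm \<mu> j else 0)"
    proof (intro sum.cong refl)
      fix i assume "i \<in> U"
      show "Tm \<mu> i * Tm \<mu> i * Xm j - Xm j * (Tm \<mu> i * Tm \<mu> i) = (if i = j then 2 *\<^sub>R Tm \<mu> j else 0)"
      proof (cases "i = j")
        case True
        have "Tm \<mu> i * Tm \<mu> i * Xm j - Xm j * (Tm \<mu> i * Tm \<mu> i) = - (Xm i * (Tm \<mu> i * Tm \<mu> i) - Tm \<mu> i * Tm \<mu> i * Xm i)"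
          using True by simp
        also have "\<dots> = 2 *\<^sub>R Tm \<mu> j" unfolding xTT[of i] using True by simp
        finally show ?thesis using True by simp
      next
        case False
        have a: "Tm \<mu> i * Xm j = Xm j * Tm \<mu> i" using TX[of i j \<mu>] False by simp
        have "Tm \<mu> i * Tm \<mu> i * Xm j = Tm \<mu> i * (Tm \<mu> i * Xm j)" by (simp only: mult.assoc)
        also have "\<dots> = Tm \<mu> i * (Xm j * Tm \<mu> i)" by (simp only: a)
        also have "\<dots> = (Tm \<mu> i * Xm j) * Tm \<mu> i" by (simp only: mult.assoc)
        also have "\<dots> = (Xm j * Tm \<mu> i) * Tm \<mu> i" by (simp only: a)
        also have "\<dots> = Xm j * (Tm \<mu> i * Tm \<mu> i)" by (simp only: mult.assoc)
        finally have h: "Tm \<mu> i * Tm \<mu> i * Xm j = Xm j * (Tm \<mu> i * Tm \<mu> i)" .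
        show ?thesis using False unfolding h by simp
      qed
    qed
    also have "\<dots> = 2 *\<^sub>R Tm \<mu> j" using fU j by (simp add: sum.delta')
    finally show ?thesis .
  qed
  have "Q * X U - X U * Q = (\<Sum>j\<in>U. E j * (Q * Xm j - Xm j * Q))"
    unfolding X_def by (rule commutator_sum) (rule cQ)
  also have "\<dots> = 2 *\<^sub>R D U" unfolding D_def scaleR_sum_right
    by (intro sum.cong refl) (simp add: QX)
  finally have C: "Q * X U - X U * Q = 2 *\<^sub>R D U" .
  have "X U * (D U * D U) = - (X U * Q)" by (simp add: DD2)
  also have "\<dots> = - (Q * X U) + 2 *\<^sub>R D U" using C by (simp add: algebra_simps)
  also have "\<dots> = D U * (D U * X U) + 2 *\<^sub>R D U" by (simp add: mult.assoc[symmetric] DD2)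
  finally show ?thesis .
qed

lemma SXa: "U \<subseteq> {1..n} \<Longrightarrow> anti (S U) (X U)"
  unfolding anti_def S_def using XXD[of U]
  by (simp add: algebra_simps scaleR_2)
lemma SDa: "U \<subseteq> {1..n} \<Longrightarrow> anti (S U) (D U)"
  unfolding anti_def S_def using XDD[of U]
  by (simp add: algebra_simps scaleR_2)


definition Y :: "nat set \<Rightarrow> nat set \<Rightarrow> 'v lop" where "Y U V = X U * D V + X V * D U"

lemma S_union: assumes "U \<subseteq> {1..n}" "V \<subseteq> {1..n}" "U \<inter> V = {}"
  shows "S (U \<union> V) = S U + S V + (1/2::real) *\<^sub>R 1 + Y U V"
proof -
  have a1: "D V * X U = - (X U * D V)" using XDa[OF assms] by (simp add: anti_def)
  have a2: "D U * X V = - (X V * D U)" using XDa[OF assms(2,1)] assms(3) by (simp add: anti_def Int_commute)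
  have "X (U \<union> V) * D (U \<union> V) - D (U \<union> V) * X (U \<union> V) - 1
     = (X U * D U - D U * X U - 1) + (X V * D V - D V * X V - 1) + 1 + 2 *\<^sub>R Y U V"
    unfolding Y_def X_union[OF assms] D_union[OF assms]
    by (simp add: algebra_simps a1 a2 scaleR_2)
  then show ?thesis unfolding S_def[of "U \<union> V"]
    by (simp add: S_def scaleR_add_right scaleR_diff_right)
qed

lemma Y_union: assumes "U \<subseteq> {1..n}" "V \<subseteq> {1..n}" "U \<inter> V = {}"
  shows "Y (U \<union> V) W = Y U W + Y V W"
  unfolding Y_def X_union[OF assms] D_union[OF assms] by (simp add: algebra_simps)

lemma Y_sym: "Y U V = Y V U" by (simp add: Y_def add.commute)

lemma PYin: assumes "U \<subseteq> {1..n}" "V \<subseteq> {1..n}" "U \<inter> V = {}"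
  shows "anti (Pm U) (Y U V)"
proof -
  have fU: "finite U" using assms(1) by (rule fin)
  show ?thesis unfolding Y_def
    by (intro anti_add anti_comm_mult comm_anti_mult PXin PDin PXout PDout) (use assms fU in \<open>auto simp: Int_commute\<close>)
qed

lemma PYout: assumes "U \<subseteq> {1..n}" "V \<subseteq> {1..n}" "W \<subseteq> {1..n}" "U \<inter> W = {}" "V \<inter> W = {}"
  shows "comm (Pm W) (Y U V)"
proof -
  have fW: "finite W" using assms(3) by (rule fin)
  show ?thesis unfolding Y_def
    by (intro comm_add comm_mult PXout PDout) (use assms fW in auto)
qed

lemma SYin: assumes "U \<subseteq> {1..n}" "V \<subseteq> {1..n}" "U \<inter> V = {}"
  shows "anti (S U) (Y U V)"
  unfolding Y_def
  by (intro anti_add anti_comm_mult comm_anti_mult SXa SDa comm_sym[OF XSc] comm_sym[OF DSc])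
     (use assms in auto)

lemma SYout: assumes "U \<subseteq> {1..n}" "V \<subseteq> {1..n}" "W \<subseteq> {1..n}" "U \<inter> W = {}" "V \<inter> W = {}"
  shows "comm (S W) (Y U V)"
  unfolding Y_def
  by (intro comm_add comm_mult comm_sym[OF XSc] comm_sym[OF DSc]) (use assms in \<open>auto simp: Int_commute\<close>)


lemma YY: assumes U: "U1 \<subseteq> {1..n}" "U2 \<subseteq> {1..n}" "U3 \<subseteq> {1..n}"
   and dj: "U1 \<inter> U2 = {}" "U1 \<inter> U3 = {}" "U2 \<inter> U3 = {}"
  shows "Y U1 U2 * Y U2 U3 + Y U2 U3 * Y U1 U2 = - ((2 *\<^sub>R S U2 + 1) * Y U1 U3)"
proof -
  have dj': "U2 \<inter> U1 = {}" "U3 \<inter> U1 = {}" "U3 \<inter> U2 = {}" using dj by auto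
  note an = XXa[of U2 U1] XDa[of U2 U1] anti_sym[OF XDa[of U1 U2]] DDa[of U2 U1] XXa[of U3 U1] XDa[of U3 U1] anti_sym[OF XDa[of U1 U3]] DDa[of U3 U1] XXa[of U3 U2] XDa[of U3 U2] anti_sym[OF XDa[of U2 U3]] DDa[of U3 U2]
  have an2: "anti (X U2) (X U1)" "anti (X U2) (D U1)" "anti (D U2) (X U1)" "anti (D U2) (D U1)"
     "anti (X U3) (X U1)" "anti (X U3) (D U1)" "anti (D U3) (X U1)" "anti (D U3) (D U1)"
     "anti (X U3) (X U2)" "anti (X U3) (D U2)" "anti (D U3) (X U2)" "anti (D U3) (D U2)"
    using an U dj dj' by auto
  have r1: "\<And>a b. anti a b \<Longrightarrow> a * b = - (b * a)" by (simp add: anti_def)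
  have r2: "\<And>a b z. anti a b \<Longrightarrow> a * (b * z) = - (b * (a * z))"
    by (simp add: anti_def) (metis mult.assoc mult_minus_left)
  note R = an2[THEN r1] an2[THEN r2]
  have S2: "2 *\<^sub>R S U2 + 1 = X U2 * D U2 - D U2 * X U2" by (simp add: S_def scaleR_diff_right)
  show ?thesis unfolding S2 Y_def
    by (simp add: algebra_simps R)
qed

end



lemma nc: "a * b = b * a \<Longrightarrow> a * (b * z) = b * (a * (z::'a::ring))" by (metis mult.assoc)
lemma na: "a * b = - (b * a) \<Longrightarrow> a * (b * z) = - (b * (a * (z::'a::ring)))"
  by (metis mult.assoc mult_minus_left)
lemma ny: "a * b = - (b * a) - c \<Longrightarrow> a * (b * z) = - (b * (a * z)) - c * (z::'a::ring)"
  by (metis mult.assoc left_diff_distrib mult_minus_left)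
lemma n1: "a * a = 1 \<Longrightarrow> a * (a * z) = (z::'a::{ring,monoid_mult})" by (metis mult.assoc mult_1_left)

lemma sc1: "a *\<^sub>R x + (a *\<^sub>R x + z) = (a + a) *\<^sub>R x + (z::'a::real_vector)"
  by (simp only: scaleR_add_left add.assoc)
lemma sc2: "a *\<^sub>R x + a *\<^sub>R x = (a + a) *\<^sub>R (x::'a::real_vector)"
  by (simp only: scaleR_add_left add.assoc)

lemma bi_abstract:
  fixes s1 s2 s3 y12 y23 y13 p1 p2 p3 :: "'a::{real_algebra,monoid_mult}"
  assumes ss: "s2*s1 = s1*s2" "s3*s1 = s1*s3" "s3*s2 = s2*s3"
    and sy: "y12*s2 = -(s2*y12)" "y23*s2 = -(s2*y23)" "y12*s3 = s3*y12" "y23*s1 = s1*y23"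
    and yy: "y23*y12 = -(y12*y23) - (2 *\<^sub>R (s2*y13) + y13)"
    and pp: "p2*p1 = p1*p2" "p3*p1 = p1*p3" "p3*p2 = p2*p3" and p22: "p2*p2 = 1"
    and ps: "p1*s1 = s1*p1" "p1*s2 = s2*p1" "p1*s3 = s3*p1"
            "p2*s1 = s1*p2" "p2*s2 = s2*p2" "p2*s3 = s3*p2"
            "p3*s1 = s1*p3" "p3*s2 = s2*p3" "p3*s3 = s3*p3"
    and pya: "p1*y12 = -(y12*p1)" "p1*y13 = -(y13*p1)" "p2*y12 = -(y12*p2)" "p2*y23 = -(y23*p2)"
             "p3*y13 = -(y13*p3)" "p3*y23 = -(y23*p3)"
    and pyc: "p1*y23 = y23*p1" "p2*y13 = y13*p2" "p3*y12 = y12*p3"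
    and hh: "h = (1/2::real) *\<^sub>R 1"
  shows "((s1+s2+h+y12)*(p1*p2)) * ((s2+s3+h+y23)*(p2*p3)) + ((s2+s3+h+y23)*(p2*p3)) * ((s1+s2+h+y12)*(p1*p2))
     = (s1+s3+h+y13)*(p1*p3) + 2 *\<^sub>R ((s2*p2) * ((s1+s2+h+y12+s3+h+(y13+y23))*((p1*p2)*p3)))
       + 2 *\<^sub>R ((s1*p1)*(s3*p3))"
  using hh
  by (simp add: algebra_simps ss sy yy pp p22 ps pya pyc
      ss[THEN nc] sy(1,2)[THEN na] sy(3,4)[THEN nc] yy[THEN ny] pp[THEN nc] p22[THEN n1] ps[THEN nc]
      pya[THEN na] pyc[THEN nc] scaleR_2 sc1 sc2)


context dd begin

lemma main:
  assumes A: "A \<subseteq> {1..n}" and B: "B \<subseteq> {1..n}"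
  shows "G A * G B + G B * G A = G ((A \<union> B) - (A \<inter> B)) + 2 *\<^sub>R (G (A \<inter> B) * G (A \<union> B))
           + 2 *\<^sub>R (G (A - (A \<inter> B)) * G (B - (A \<inter> B)))"
proof -
  define U1 where "U1 = A - B"
  define U2 where "U2 = A \<inter> B"
  define U3 where "U3 = B - A"
  have U: "U1 \<subseteq> {1..n}" "U2 \<subseteq> {1..n}" "U3 \<subseteq> {1..n}" using A B by (auto simp: U1_def U2_def U3_def)
  have dj: "U1 \<inter> U2 = {}" "U1 \<inter> U3 = {}" "U2 \<inter> U3 = {}" "U2 \<inter> U1 = {}" "U3 \<inter> U1 = {}" "U3 \<inter> U2 = {}"
    by (auto simp: U1_def U2_def U3_def)
  have U12: "U1 \<union> U2 \<subseteq> {1..n}" and dj12: "(U1 \<union> U2) \<inter> U3 = {}" using U dj by auto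
  have f: "finite U1" "finite U2" "finite U3" using U by (simp_all add: fin)
  have eA: "A = U1 \<union> U2" and eB: "B = U2 \<union> U3" and eD: "(A \<union> B) - (A \<inter> B) = U1 \<union> U3"
    and eU: "A \<union> B = (U1 \<union> U2) \<union> U3" and eC: "A \<inter> B = U2" and eA': "A - (A \<inter> B) = U1"
    and eB': "B - (A \<inter> B) = U3"
    by (auto simp: U1_def U2_def U3_def)
  define h :: "'v lop" where "h = (1/2::real) *\<^sub>R 1"
  have GA: "G A = (S U1 + S U2 + h + Y U1 U2) * (Pm U1 * Pm U2)"
    unfolding eA G_def h_def by (simp add: S_union[OF U(1,2) dj(1)] P_union f dj)
  have GB: "G B = (S U2 + S U3 + h + Y U2 U3) * (Pm U2 * Pm U3)"
    unfolding eB G_def h_def by (simp add: S_union[OF U(2,3) dj(3)] P_union f dj)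
  have GD: "G ((A \<union> B) - (A \<inter> B)) = (S U1 + S U3 + h + Y U1 U3) * (Pm U1 * Pm U3)"
    unfolding eD G_def h_def by (simp add: S_union[OF U(1,3) dj(2)] P_union f dj)
  have GU: "G (A \<union> B) = (S U1 + S U2 + h + Y U1 U2 + S U3 + h + (Y U1 U3 + Y U2 U3)) * ((Pm U1 * Pm U2) * Pm U3)"
    unfolding eU G_def h_def
    by (simp add: S_union[OF U12 U(3) dj12] P_union[of "U1 \<union> U2" U3] Y_union[OF U(1,2) dj(1)]
        S_union[OF U(1,2) dj(1)] P_union f dj dj12)
  have GC: "G (A \<inter> B) = S U2 * Pm U2" unfolding eC G_def ..
  have G1: "G (A - (A \<inter> B)) = S U1 * Pm U1" unfolding eA' G_def ..
  have G3: "G (B - (A \<inter> B)) = S U3 * Pm U3" unfolding eB' G_def ..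
  have c2: "\<And>a b. comm a b \<Longrightarrow> a * b = b * a" by (simp add: comm_def)
  have a2: "\<And>a b. anti a b \<Longrightarrow> a * b = - (b * a)" by (simp add: anti_def)
  have yy0: "Y U1 U2 * Y U2 U3 + Y U2 U3 * Y U1 U2 = - ((2 *\<^sub>R S U2 + 1) * Y U1 U3)"
    by (rule YY) (use U dj in auto)
  have yy: "Y U2 U3 * Y U1 U2 = - (Y U1 U2 * Y U2 U3) - (2 *\<^sub>R (S U2 * Y U1 U3) + Y U1 U3)"
  proof -
    have "Y U2 U3 * Y U1 U2 = (Y U1 U2 * Y U2 U3 + Y U2 U3 * Y U1 U2) - Y U1 U2 * Y U2 U3" by simp
    also have "\<dots> = - ((2 *\<^sub>R S U2 + 1) * Y U1 U3) - Y U1 U2 * Y U2 U3" by (simp only: yy0)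
    also have "\<dots> = - (Y U1 U2 * Y U2 U3) - (2 *\<^sub>R (S U2 * Y U1 U3) + Y U1 U3)"
      by (simp add: distrib_right algebra_simps)
    finally show ?thesis .
  qed
  show ?thesis
    unfolding GA GB GD GU GC G1 G3
  proof (rule bi_abstract[OF _ _ _ _ _ _ _ yy _ _ _ PP1 _ _ _ _ _ _ _ _ _ _ _ _ _ _ _ _ _ _ h_def])
    show "S U2 * S U1 = S U1 * S U2" "S U3 * S U1 = S U1 * S U3" "S U3 * S U2 = S U2 * S U3"
      using U dj by (auto intro!: c2 SSc)
    show "Y U1 U2 * S U2 = - (S U2 * Y U1 U2)"
      using a2[OF anti_sym[OF SYin[of U2 U1]]] U dj by (simp add: Y_sym)
    show "Y U2 U3 * S U2 = - (S U2 * Y U2 U3)"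
      using a2[OF anti_sym[OF SYin[of U2 U3]]] U dj by simp
    show "Y U1 U2 * S U3 = S U3 * Y U1 U2"
      using c2[OF comm_sym[OF SYout[of U1 U2 U3]]] U dj by simp
    show "Y U2 U3 * S U1 = S U1 * Y U2 U3"
      using c2[OF comm_sym[OF SYout[of U2 U3 U1]]] U dj by simp
    show "Pm U2 * Pm U1 = Pm U1 * Pm U2" "Pm U3 * Pm U1 = Pm U1 * Pm U3" "Pm U3 * Pm U2 = Pm U2 * Pm U3"
      by (auto intro!: c2 PPc)
    show "Pm U1 * S U1 = S U1 * Pm U1" "Pm U1 * S U2 = S U2 * Pm U1" "Pm U1 * S U3 = S U3 * Pm U1"
         "Pm U2 * S U1 = S U1 * Pm U2" "Pm U2 * S U2 = S U2 * Pm U2" "Pm U2 * S U3 = S U3 * Pm U2"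
         "Pm U3 * S U1 = S U1 * Pm U3" "Pm U3 * S U2 = S U2 * Pm U3" "Pm U3 * S U3 = S U3 * Pm U3"
      using U dj f by (auto intro!: c2 PSc)
    show "Pm U1 * Y U1 U2 = - (Y U1 U2 * Pm U1)" using a2[OF PYin[of U1 U2]] U dj by simp
    show "Pm U1 * Y U1 U3 = - (Y U1 U3 * Pm U1)" using a2[OF PYin[of U1 U3]] U dj by simp
    show "Pm U2 * Y U1 U2 = - (Y U1 U2 * Pm U2)" using a2[OF PYin[of U2 U1]] U dj by (simp add: Y_sym)
    show "Pm U2 * Y U2 U3 = - (Y U2 U3 * Pm U2)" using a2[OF PYin[of U2 U3]] U dj by simp
    show "Pm U3 * Y U1 U3 = - (Y U1 U3 * Pm U3)" using a2[OF PYin[of U3 U1]] U dj by (simp add: Y_sym)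
    show "Pm U3 * Y U2 U3 = - (Y U2 U3 * Pm U3)" using a2[OF PYin[of U3 U2]] U dj by (simp add: Y_sym)
    show "Pm U1 * Y U2 U3 = Y U2 U3 * Pm U1" using c2[OF PYout[of U2 U3 U1]] U dj by simp
    show "Pm U2 * Y U1 U3 = Y U1 U3 * Pm U2" using c2[OF PYout[of U1 U3 U2]] U dj by simp
    show "Pm U3 * Y U1 U2 = Y U1 U2 * Pm U3" using c2[OF PYout[of U1 U2 U3]] U dj by simp
  qed
qed

end


theorem proposition4:
  fixes n :: nat and \<mu> :: "nat \<Rightarrow> real" and e :: "nat \<Rightarrow> 'v::real_vector \<Rightarrow> 'v"
    and A B :: "nat set" and F :: "'v pv"
  assumes "n \<ge> 1"
    and "\<forall>i\<in>{1..n}. \<mu> i > 0"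
    and "\<forall>i\<in>{1..n}. linear (e i)"
    and "\<forall>i\<in>{1..n}. \<forall>j\<in>{1..n}. \<forall>v. e i (e j v) + e j (e i v) = (if i = j then -2 else 0) *\<^sub>R v"
    and "A \<subseteq> {1..n}" and "B \<subseteq> {1..n}"
    and "is_poly n F"
  shows "(\<lambda>\<alpha>. Gamma \<mu> e A (Gamma \<mu> e B F) \<alpha> + Gamma \<mu> e B (Gamma \<mu> e A F) \<alpha>) =
         (\<lambda>\<alpha>. Gamma \<mu> e ((A \<union> B) - (A \<inter> B)) F \<alpha>
              + 2 *\<^sub>R Gamma \<mu> e (A \<inter> B) (Gamma \<mu> e (A \<union> B) F) \<alpha>
              + 2 *\<^sub>R Gamma \<mu> e (A - (A \<inter> B)) (Gamma \<mu> e (B - (A \<inter> B)) F) \<alpha>)"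
proof -
  interpret dd n \<mu> e using assms(3,4) by unfold_locales
  have A: "A \<subseteq> {1..n}" and B: "B \<subseteq> {1..n}" by fact+
  have sub: "(A \<union> B) - (A \<inter> B) \<subseteq> {1..n}" "A \<inter> B \<subseteq> {1..n}" "A \<union> B \<subseteq> {1..n}"
    "A - (A \<inter> B) \<subseteq> {1..n}" "B - (A \<inter> B) \<subseteq> {1..n}" using A B by auto
  have "app (G A * G B + G B * G A) F = app (G ((A \<union> B) - (A \<inter> B)) + 2 *\<^sub>R (G (A \<inter> B) * G (A \<union> B))
           + 2 *\<^sub>R (G (A - (A \<inter> B)) * G (B - (A \<inter> B)))) F"
    using main[OF A B] by simp
  moreover have "\<And>U. U \<subseteq> {1..n} \<Longrightarrow> app (G U) = Gamma \<mu> e U" using app_G by blast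
  ultimately show ?thesis using A B sub by (simp add: app_plus app_times app_sc)
qed

end
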